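(* Let $k\ge2$. For all integers $n\ge1$ and $i\ge0$, $|\mathsf{Manila}_k(n,i)|=|\mathsf{Paths}_k(n,i)|$.
   Context: Fix $k\ge2$. The sets $\mathsf{Manila}_k(n,i)$ of formal words (manila folder configurations: $n$ folders each with $k-1$ compartments, $i+1$ spines visible from below) are defined recursively: (M1) $\mathsf{Manila}_k(0,-1)=\{\epsilon\}$ (the empty configuration); (M2) for $n\ge1$, $\mathsf{Manila}_k(n,0)$ consists of all bracketed tuples $(M_1,\dots,M_{k-1})$ with $M_j\in\mathsf{Manila}_k(n_j,i_j)$ for some $n_j\ge0$ and any $i_j$, where $n_1+\dots+n_{k-1}=n-1$; (M3) for $\ell>1$, $\mathsf{Manila}_k(n,\ell-1)$ consists of all concatenations $M_1M_2\cdots M_\ell$ with $M_j\in\mathsf{Manila}_k(n_j,0)$ and $n_1+\dots+n_\ell=n$. $\mathsf{Paths}_k(n,i)$ is the set of lattice paths from $((k-1)n,n)$ to $(0,0)$ using unit south steps $(0,-1)$ and unit west steps $(-1,0)$, staying in the first quadrant weakly below the line $(k-1)y=x$ (i.e. $(k-1)y\le x$ at every point), which meet the line $(k-1)y=x$ at exactly $i$ lattice points other than the two endpoints. *)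

theory Defs
  imports Main
begin

text \<open>Formal words for manila folder configurations: strings over the
alphabet of left bracket, comma and right bracket.  A tuple
(M_1,...,M_{k-1}) is the word  LP M_1 Comma M_2 ... Comma M_{k-1} RP.\<close>

datatype sym = LP | Comma | RP

fun comma_join :: "sym list list \<Rightarrow> sym list" where
  "comma_join [] = []"
| "comma_join [M] = M"
| "comma_join (M # Ms) = M @ [Comma] @ comma_join Ms"

definition tuple_word :: "sym list list \<Rightarrow> sym list" where
  "tuple_word Ms = [LP] @ comma_join Ms @ [RP]"

text \<open>manila k n i w  means  w \<in> Manila_k(n,i).  The index i is an integer
since Manila_k(0,-1) occurs.\<close>

inductive manila :: "nat \<Rightarrow> nat \<Rightarrow> int \<Rightarrow> sym list \<Rightarrow> bool" for k :: nat where
  M1: "manila k 0 (-1) []"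
| M2: "\<lbrakk> n \<ge> 1; length Ms = k - 1; length ns = k - 1; length is = k - 1;
         \<forall>j < k - 1. manila k (ns ! j) (is ! j) (Ms ! j);
         sum_list ns = n - 1 \<rbrakk>
       \<Longrightarrow> manila k n 0 (tuple_word Ms)"
| M3: "\<lbrakk> l > 1; length Ms = l; length ns = l;
         \<forall>j < l. manila k (ns ! j) 0 (Ms ! j);
         sum_list ns = n \<rbrakk>
       \<Longrightarrow> manila k n (int l - 1) (concat Ms)"

definition Manila :: "nat \<Rightarrow> nat \<Rightarrow> int \<Rightarrow> sym list set" where
  "Manila k n i = {w. manila k n i w}"

text \<open>Lattice paths: a list of unit steps, South (0,-1) or West (-1,0),
starting at ((k-1)n, n).\<close>

datatype step = South | West

definition pos :: "nat \<Rightarrow> nat \<Rightarrow> step list \<Rightarrow> int \<times> int" where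
  "pos k n q = (int ((k - 1) * n) - int (length (filter (\<lambda>s. s = West) q)),
                int n - int (length (filter (\<lambda>s. s = South) q)))"

definition Paths :: "nat \<Rightarrow> nat \<Rightarrow> nat \<Rightarrow> step list set" where
  "Paths k n i = {p.
      pos k n p = (0, 0) \<and>
      (\<forall>m \<le> length p. let (x, y) = pos k n (take m p) in
           0 \<le> x \<and> 0 \<le> y \<and> int (k - 1) * y \<le> x) \<and>
      card {pos k n (take m p) | m. 0 < m \<and> m < length p \<and>
              (let (x, y) = pos k n (take m p) in int (k - 1) * y = x)} = i}"

end

theory Submission
  imports Defs
begin


definition phi :: "sym list \<Rightarrow> step list" where
  "phi = map (\<lambda>s. if s = LP then South else West)"

lemma phi_simps[simp]: "phi [] = []" "phi (a # w) = (if a = LP then South else West) # phi w"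
  "phi (u @ v) = phi u @ phi v" "phi (concat Ms) = concat (map phi Ms)"
  by (auto simp: phi_def map_concat)

fun psi :: "nat \<Rightarrow> nat list \<Rightarrow> step list \<Rightarrow> sym list" where
  "psi k st [] = []"
| "psi k st (South # q) = LP # psi k ((k-2) # st) q"
| "psi k [] (West # q) = RP # psi k [] q"
| "psi k (0 # st) (West # q) = RP # psi k st q"
| "psi k (Suc c # st) (West # q) = Comma # psi k (c # st) q"

lemma psi_concat:
  assumes "\<forall>M\<in>set Ms. \<forall>st q. psi k st (phi M @ q) = M @ psi k st q"
  shows "psi k st (phi (concat Ms) @ q) = concat Ms @ psi k st q"
  using assms by (induction Ms arbitrary: st q) auto

lemma psi_comma:
  assumes "\<forall>M\<in>set Ms. \<forall>st q. psi k st (phi M @ q) = M @ psi k st q" "length Ms = Suc c"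
  shows "psi k (c # st) (phi (comma_join Ms) @ West # q) = comma_join Ms @ RP # psi k st q"
  using assms
proof (induction Ms arbitrary: c rule: comma_join.induct)
  case 1 then show ?case by simp
next
  case (2 M) then show ?case by simp
next
  case (3 M v va)
  then obtain c' where c: "c = Suc c'" by (cases c) auto
  have "psi k (c # st) (phi (comma_join (M # v # va)) @ West # q)
     = M @ psi k (c # st) (West # phi (comma_join (v # va)) @ West # q)"
    using 3(2) by simp
  also have "\<dots> = M @ Comma # psi k (c' # st) (phi (comma_join (v # va)) @ West # q)"
    using c by simp
  also have "\<dots> = M @ Comma # comma_join (v # va) @ RP # psi k st q"
    using 3 c by simp
  finally show ?case by simp
qed

lemma psi_manila:
  assumes "manila k n i w" "k \<ge> 2"
  shows "\<forall>st q. psi k st (phi w @ q) = w @ psi k st q"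
  using assms
proof (induction rule: manila.induct)
  case M1 then show ?case by simp
next
  case (M2 n Ms ns "is")
  have all: "\<forall>M\<in>set Ms. \<forall>st q. psi k st (phi M @ q) = M @ psi k st q"
    using M2 by (auto simp: in_set_conv_nth)
  have len: "length Ms = Suc (k-2)" using M2 by simp
  show ?case
  proof (intro allI)
    fix st q
    have "psi k st (phi (tuple_word Ms) @ q) = LP # psi k ((k-2) # st) (phi (comma_join Ms) @ West # q)"
      by (simp add: tuple_word_def)
    also have "\<dots> = LP # comma_join Ms @ RP # psi k st q"
      using psi_comma[OF all len] by simp
    finally show "psi k st (phi (tuple_word Ms) @ q) = tuple_word Ms @ psi k st q"
      by (simp add: tuple_word_def)
  qed
next
  case (M3 l Ms ns n)
  have all: "\<forall>M\<in>set Ms. \<forall>st q. psi k st (phi M @ q) = M @ psi k st q"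
    using M3 by (auto simp: in_set_conv_nth)
  show ?case using psi_concat[OF all] by simp
qed

lemma psi_phi: "manila k n i w \<Longrightarrow> k \<ge> 2 \<Longrightarrow> psi k [] (phi w) = w"
  using psi_manila[of k n i w] by (metis append_Nil2 psi.simps(1))



definition nS :: "step list \<Rightarrow> nat" where "nS q = length (filter (\<lambda>s. s = South) q)"
definition nW :: "step list \<Rightarrow> nat" where "nW q = length (filter (\<lambda>s. s = West) q)"
definition hgt :: "nat \<Rightarrow> step list \<Rightarrow> int" where
  "hgt k q = int (k-1) * int (nS q) - int (nW q)"
definition dyck :: "nat \<Rightarrow> step list \<Rightarrow> bool" where
  "dyck k q = ((\<forall>m \<le> length q. 0 \<le> hgt k (take m q)) \<and> hgt k q = 0)"
definition TT :: "nat \<Rightarrow> step list \<Rightarrow> nat set" where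
  "TT k q = {m. 0 < m \<and> m < length q \<and> hgt k (take m q) = 0}"
definition prim :: "nat \<Rightarrow> step list \<Rightarrow> bool" where
  "prim k q = (dyck k q \<and> q \<noteq> [] \<and> TT k q = {})"
definition JJ :: "step list list \<Rightarrow> step list" where
  "JJ Ds = concat (map (\<lambda>D. D @ [West]) Ds)"

lemma nS_simps[simp]: "nS [] = 0" "nS (South # q) = Suc (nS q)" "nS (West # q) = nS q"
  "nS (u @ v) = nS u + nS v"
  by (auto simp: nS_def)
lemma nW_simps[simp]: "nW [] = 0" "nW (South # q) = nW q" "nW (West # q) = Suc (nW q)"
  "nW (u @ v) = nW u + nW v"
  by (auto simp: nW_def)
lemma hgt_simps[simp]: "hgt k [] = 0" "hgt k (South # q) = int (k-1) + hgt k q"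
  "hgt k (West # q) = hgt k q - 1" "hgt k (u @ v) = hgt k u + hgt k v"
  by (auto simp: hgt_def algebra_simps)

lemma nS_nW: "nS q + nW q = length q"
proof (induction q)
  case (Cons a q) then show ?case by (cases a) auto
qed simp

lemma JJ_simps[simp]: "JJ [] = []" "JJ (D # Ds) = D @ West # JJ Ds"
  by (auto simp: JJ_def)

lemma finite_TT[simp]: "finite (TT k q)"
  unfolding TT_def by (rule finite_subset[of _ "{..<length q}"]) auto

lemma take_Cons': "0 < m \<Longrightarrow> take m (x # xs) = x # take (m - 1) xs"
  by (cases m) auto

lemma posJ:
  assumes "\<forall>D\<in>set Ds. dyck k D" "length Ds \<le> c"
  shows "(\<forall>m < length (JJ Ds). 0 < int c + hgt k (take m (JJ Ds))) \<and> hgt k (JJ Ds) = - int (length Ds)"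
  using assms
proof (induction Ds arbitrary: c)
  case Nil then show ?case by simp
next
  case (Cons D Ds)
  have dD: "dyck k D" using Cons by simp
  have c1: "c \<ge> 1" using Cons by simp
  have IH: "(\<forall>m < length (JJ Ds). 0 < int (c-1) + hgt k (take m (JJ Ds))) \<and> hgt k (JJ Ds) = - int (length Ds)"
    using Cons.IH[of "c-1"] Cons.prems by auto
  have "0 < int c + hgt k (take m (JJ (D # Ds)))" if m: "m < length (JJ (D # Ds))" for m
  proof (cases "m \<le> length D")
    case True
    then have "take m (JJ (D # Ds)) = take m D" by simp
    moreover have "0 \<le> hgt k (take m D)" using dD True by (simp add: dyck_def)
    ultimately show ?thesis using c1 by simp
  next
    case False
    define r where "r = m - length D - 1"
    have tk: "take m (JJ (D # Ds)) = D @ West # take r (JJ Ds)"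
      using False by (simp add: r_def take_Cons')
    have hD: "hgt k D = 0" using dD by (simp add: dyck_def)
    have r: "r < length (JJ Ds)" using m False by (simp add: r_def)
    have "0 < int (c-1) + hgt k (take r (JJ Ds))" using IH r by blast
    then show ?thesis using tk hD c1 by simp
  qed
  moreover have "hgt k (JJ (D # Ds)) = - int (length (D # Ds))"
    using IH dD by (simp add: dyck_def)
  ultimately show ?case by blast
qed

lemma primJ:
  assumes "\<forall>D\<in>set Ds. dyck k D" "length Ds = k - 1" "k \<ge> 2"
  shows "prim k (South # JJ Ds)"
proof -
  have P: "(\<forall>m < length (JJ Ds). 0 < int (k-1) + hgt k (take m (JJ Ds))) \<and> hgt k (JJ Ds) = - int (k-1)"
    using posJ[OF assms(1), of "k-1"] assms(2) by simp
  have tot: "hgt k (South # JJ Ds) = 0" using P by simp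
  have D: "dyck k (South # JJ Ds)"
    unfolding dyck_def
  proof (intro conjI allI impI tot)
    fix m assume m: "m \<le> length (South # JJ Ds)"
    show "0 \<le> hgt k (take m (South # JJ Ds))"
    proof (cases "m = 0")
      case False
      then have tk: "take m (South # JJ Ds) = South # take (m-1) (JJ Ds)" by (simp add: take_Cons')
      show ?thesis
      proof (cases "m - 1 < length (JJ Ds)")
        case True then show ?thesis using P tk by force
      next
        case False
        then have "take (m-1) (JJ Ds) = JJ Ds" by simp
        then show ?thesis using tk P by simp
      qed
    qed simp
  qed
  have "TT k (South # JJ Ds) = {}"
  proof -
    have "hgt k (take m (South # JJ Ds)) \<noteq> 0" if "0 < m" "m < length (South # JJ Ds)" for m
    proof -
      have tk: "take m (South # JJ Ds) = South # take (m-1) (JJ Ds)" using that by (simp add: take_Cons')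
      have "m - 1 < length (JJ Ds)" using that by simp
      then show ?thesis using P tk by force
    qed
    then show ?thesis unfolding TT_def by blast
  qed
  then show ?thesis using D by (simp add: prim_def)
qed

lemma touch_append:
  assumes "prim k a" "dyck k b" "b \<noteq> []"
  shows "dyck k (a @ b) \<and> TT k (a @ b) = insert (length a) ((+) (length a) ` TT k b)"
proof -
  have da: "dyck k a" and ne: "a \<noteq> []" and Ta: "TT k a = {}" using assms by (auto simp: prim_def)
  have ha: "hgt k a = 0" using da by (simp add: dyck_def)
  have hb: "hgt k b = 0" using assms by (simp add: dyck_def)
  have tk: "take m (a @ b) = (if m \<le> length a then take m a else a @ take (m - length a) b)" for m
    by auto
  have d: "dyck k (a @ b)"
    unfolding dyck_def
  proof (intro conjI allI impI)
    fix m assume m: "m \<le> length (a @ b)"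
    show "0 \<le> hgt k (take m (a @ b))"
    proof (cases "m \<le> length a")
      case True then show ?thesis using da tk by (simp add: dyck_def)
    next
      case False
      have "0 \<le> hgt k (take (m - length a) b)" using assms(2) m by (simp add: dyck_def)
      then show ?thesis using False tk ha by simp
    qed
  next
    show "hgt k (a @ b) = 0" using ha hb by simp
  qed
  have "m \<in> TT k (a @ b) \<longleftrightarrow> m \<in> insert (length a) ((+) (length a) ` TT k b)" for m
  proof (cases "m < length a")
    case True
    have "m \<notin> TT k a" using Ta by simp
    then have "m \<notin> TT k (a @ b)" using True by (simp add: TT_def)
    moreover have "m \<notin> insert (length a) ((+) (length a) ` TT k b)" using True by auto
    ultimately show ?thesis by blast
  next
    case False
    show ?thesis
    proof (cases "m = length a")
      case True then show ?thesis using ne ha assms(3) by (auto simp: TT_def)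
    next
      case F2: False
      define r where "r = m - length a"
      have m: "m = length a + r" "0 < r" using F2 False by (auto simp: r_def)
      have "m \<in> TT k (a @ b) \<longleftrightarrow> r \<in> TT k b"
        using m ha by (simp add: TT_def)
      moreover have "m \<in> insert (length a) ((+) (length a) ` TT k b) \<longleftrightarrow> r \<in> TT k b"
        using m by auto
      ultimately show ?thesis by blast
    qed
  qed
  then show ?thesis using d by blast
qed

lemma card_touch_append:
  assumes "prim k a" "dyck k b" "b \<noteq> []"
  shows "card (TT k (a @ b)) = Suc (card (TT k b))"
proof -
  have "length a \<notin> (+) (length a) ` TT k b" by (auto simp: TT_def)
  moreover have "card ((+) (length a) ` TT k b) = card (TT k b)"
    by (rule card_image) auto
  ultimately show ?thesis using touch_append[OF assms] by simp
qed

lemma concat_prim: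
  assumes "\<forall>a\<in>set ps. prim k a" "ps \<noteq> []"
  shows "dyck k (concat ps) \<and> card (TT k (concat ps)) = length ps - 1 \<and> concat ps \<noteq> []"
  using assms
proof (induction ps)
  case Nil then show ?case by simp
next
  case (Cons a ps)
  show ?case
  proof (cases "ps = []")
    case True then show ?thesis using Cons by (auto simp: prim_def)
  next
    case False
    then have IH: "dyck k (concat ps) \<and> card (TT k (concat ps)) = length ps - 1 \<and> concat ps \<noteq> []"
      using Cons by simp
    have pa: "prim k a" using Cons by simp
    show ?thesis using touch_append[OF pa] card_touch_append[OF pa] IH False pa
      by (auto simp: prim_def)
  qed
qed



lemma hgt_take_Suc:
  assumes "m < length q"
  shows "hgt k (take (Suc m) q) = hgt k (take m q) + (if q ! m = South then int (k-1) else -1)"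
proof -
  have "take (Suc m) q = take m q @ [q ! m]" using assms by (simp add: take_Suc_conv_app_nth)
  then show ?thesis by (cases "q ! m") auto
qed

lemma parseJ:
  assumes "c \<ge> 1" "\<forall>m < length q. 0 < int c + hgt k (take m q)" "int c + hgt k q = 0"
  shows "\<exists>Ds. length Ds = c \<and> (\<forall>D\<in>set Ds. dyck k D) \<and> q = JJ Ds"
  using assms
proof (induction c arbitrary: q)
  case 0 then show ?case by simp
next
  case (Suc c)
  have ex: "\<exists>m. hgt k (take m q) < 0" using Suc.prems(3) by (intro exI[of _ "length q"]) simp
  define m0 where "m0 = (LEAST m. hgt k (take m q) < 0)"
  have m0neg: "hgt k (take m0 q) < 0" using LeastI_ex[OF ex] by (simp add: m0_def)
  have m0min: "m < m0 \<Longrightarrow> 0 \<le> hgt k (take m q)" for m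
    using not_less_Least[of m "\<lambda>m. hgt k (take m q) < 0"] by (simp add: m0_def)
  have m0pos: "m0 > 0" using m0neg by (cases m0) auto
  have m0len: "m0 \<le> length q"
  proof (rule ccontr)
    assume "\<not> ?thesis"
    then have "length q < m0" by simp
    then have "0 \<le> hgt k (take (length q) q)" using m0min by blast
    then show False using Suc.prems(3) by simp
  qed
  define p where "p = m0 - 1"
  have p: "p < length q" "Suc p = m0" using m0len m0pos by (auto simp: p_def)
  have hp: "0 \<le> hgt k (take p q)" using m0min p by simp
  have step: "hgt k (take m0 q) = hgt k (take p q) + (if q ! p = South then int (k-1) else -1)"
    using hgt_take_Suc[OF p(1), of k] p by simp
  have W: "q ! p = West" using step hp m0neg by (cases "q ! p") auto
  have h0: "hgt k (take p q) = 0" and hm0: "hgt k (take m0 q) = -1" using step hp m0neg W by auto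
  define D where "D = take p q"
  define q' where "q' = drop m0 q"
  have qeq: "q = D @ West # q'"
    unfolding D_def q'_def using p W
    by (metis Cons_nth_drop_Suc append_take_drop_id)
  have dD: "dyck k D"
    unfolding dyck_def D_def using h0 m0min p by (auto simp: min_def)
  show ?case
  proof (cases "c = 0")
    case True
    have "q' = []"
    proof (rule ccontr)
      assume "q' \<noteq> []"
      then have "m0 < length q" using q'_def by simp
      then show False using Suc.prems(2) hm0 True by force
    qed
    then show ?thesis using qeq dD True by (intro exI[of _ "[D]"]) simp
  next
    case False
    have lenD: "length D = p" using p by (simp add: D_def)
    have "0 < int c + hgt k (take m q')" if "m < length q'" for m
    proof -
      have "take (Suc p + m) q = D @ West # take m q'" using qeq lenD by simp
      moreover have "Suc p + m < length q" using that qeq lenD by simp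
      ultimately show ?thesis using Suc.prems(2) h0 D_def by force
    qed
    moreover have "int c + hgt k q' = 0" using Suc.prems(3) qeq dD by (simp add: dyck_def)
    ultimately obtain Ds where "length Ds = c" "\<forall>D\<in>set Ds. dyck k D" "q' = JJ Ds"
      using Suc.IH False by (meson less_one not_less)
    then show ?thesis using qeq dD by (intro exI[of _ "D # Ds"]) auto
  qed
qed

lemma parse_prim:
  assumes "prim k p" "k \<ge> 2"
  shows "\<exists>Ds. length Ds = k - 1 \<and> (\<forall>D\<in>set Ds. dyck k D) \<and> p = South # JJ Ds"
proof -
  have dp: "dyck k p" and ne: "p \<noteq> []" and Tp: "TT k p = {}" using assms by (auto simp: prim_def)
  obtain s q where pq: "p = s # q" using ne by (cases p) auto
  have "0 \<le> hgt k (take 1 p)" using dp ne by (simp add: dyck_def Suc_le_eq)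
  then have S: "s = South" using pq by (cases s) auto
  have "0 < int (k-1) + hgt k (take m q)" if m: "m < length q" for m
  proof (cases "m = 0")
    case True then show ?thesis using assms(2) by simp
  next
    case False
    have "Suc m \<notin> TT k p" using Tp by simp
    then have "hgt k (take (Suc m) p) \<noteq> 0" using m pq by (simp add: TT_def)
    moreover have "Suc m \<le> length p" using m pq by simp
    then have "0 \<le> hgt k (take (Suc m) p)" using dp unfolding dyck_def by blast
    ultimately show ?thesis using pq S by simp
  qed
  moreover have "int (k-1) + hgt k q = 0" using dp pq S by (simp add: dyck_def)
  moreover have "1 \<le> k - 1" using assms(2) by simp
  ultimately have "\<exists>Ds. length Ds = k - 1 \<and> (\<forall>D\<in>set Ds. dyck k D) \<and> q = JJ Ds"
    using parseJ[of "k-1" q k] by blast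
  then obtain Ds where "length Ds = k - 1" "\<forall>D\<in>set Ds. dyck k D" "q = JJ Ds" by blast
  then show ?thesis using pq S by auto
qed

lemma split_first:
  assumes "dyck k p" "TT k p \<noteq> {}"
  shows "\<exists>a b. p = a @ b \<and> prim k a \<and> dyck k b \<and> b \<noteq> []"
proof -
  obtain m1 where m1: "m1 \<in> TT k p" using assms by auto
  define m0 where "m0 = (LEAST m. m \<in> TT k p)"
  have m0T: "m0 \<in> TT k p" using LeastI[of "\<lambda>m. m \<in> TT k p", OF m1] by (simp add: m0_def)
  have m0min: "m < m0 \<Longrightarrow> m \<notin> TT k p" for m
    using not_less_Least[of m "\<lambda>m. m \<in> TT k p"] by (simp add: m0_def)
  have m0: "0 < m0" "m0 < length p" "hgt k (take m0 p) = 0" using m0T by (auto simp: TT_def)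
  define a where "a = take m0 p"
  define b where "b = drop m0 p"
  have pab: "p = a @ b" by (simp add: a_def b_def)
  have la: "length a = m0" using m0 by (simp add: a_def)
  have da: "dyck k a"
    unfolding dyck_def
  proof (intro conjI allI impI)
    fix m assume "m \<le> length a"
    then have "m \<le> length p" "take m a = take m p" using la m0 by (auto simp: a_def)
    then show "0 \<le> hgt k (take m a)" using assms(1) unfolding dyck_def by simp
  next
    show "hgt k a = 0" using m0 by (simp add: a_def)
  qed
  have Ta: "TT k a = {}"
  proof -
    have "m \<notin> TT k a" for m
    proof
      assume "m \<in> TT k a"
      then have "0 < m" "m < m0" "hgt k (take m a) = 0" using la by (auto simp: TT_def)
      moreover have "take m a = take m p" using \<open>m < m0\<close> by (simp add: a_def)
      ultimately have "0 < m" "m < m0" "hgt k (take m p) = 0" by auto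
      then have "m \<in> TT k p" using m0 by (simp add: TT_def)
      then show False using m0min \<open>m < m0\<close> by blast
    qed
    then show ?thesis by blast
  qed
  have db: "dyck k b"
    unfolding dyck_def
  proof (intro conjI allI impI)
    fix m assume mb: "m \<le> length b"
    have "m0 + m \<le> length p" using mb pab la by simp
    then have "0 \<le> hgt k (take (m0 + m) p)" using assms(1) unfolding dyck_def by blast
    moreover have "take (m0 + m) p = a @ take m b" using pab la by simp
    moreover have "hgt k a = 0" using m0 by (simp add: a_def)
    ultimately show "0 \<le> hgt k (take m b)" by simp
  next
    have "hgt k a = 0" using m0 by (simp add: a_def)
    moreover have "hgt k (a @ b) = 0" using assms(1) pab by (simp add: dyck_def)
    ultimately show "hgt k b = 0" by simp
  qed
  have "b \<noteq> []" using m0 by (simp add: b_def)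
  moreover have "a \<noteq> []" using la m0 by auto
  ultimately show ?thesis using pab da Ta db unfolding prim_def by blast
qed



lemma list_choice:
  "\<forall>x\<in>set xs. \<exists>y. P x y \<Longrightarrow> \<exists>ys. length ys = length xs \<and> (\<forall>j<length xs. P (xs!j) (ys!j))"
proof (induction xs)
  case Nil then show ?case by simp
next
  case (Cons x xs)
  then obtain y ys where "P x y" "length ys = length xs" "\<forall>j<length xs. P (xs!j) (ys!j)" by auto
  then show ?case by (intro exI[of _ "y # ys"]) (auto simp: nth_Cons' less_Suc_eq_0_disj)
qed

lemma phi_cj: "Ms \<noteq> [] \<Longrightarrow> phi (comma_join Ms) @ [West] = JJ (map phi Ms)"
  by (induction Ms rule: comma_join.induct) auto

lemma phi_tuple: "Ms \<noteq> [] \<Longrightarrow> phi (tuple_word Ms) = South # JJ (map phi Ms)"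
  using phi_cj[of Ms] by (simp add: tuple_word_def)

lemma nS_JJ: "nS (JJ Ds) = sum_list (map nS Ds)"
  by (induction Ds) auto

lemma nS_concat: "nS (concat Ds) = sum_list (map nS Ds)"
  by (induction Ds) auto

lemma len_JJ: "D \<in> set Ds \<Longrightarrow> length D < length (JJ Ds)"
  by (induction Ds) auto

lemma length_phi[simp]: "length (phi w) = length w"
  by (simp add: phi_def)

lemma manila_app:
  assumes "manila k n 0 u" "manila k m j w" "0 \<le> j"
  shows "manila k (n + m) (j + 1) (u @ w)"
  using assms(2)
proof (cases rule: manila.cases)
  case M1 then show ?thesis using assms(3) by simp
next
  case (M2 Ms ns "is")
  have "manila k (sum_list [n, m]) (int 2 - 1) (concat [u, w])"
  proof (rule manila.M3)
    show "\<forall>j<2. manila k ([n, m] ! j) 0 ([u, w] ! j)"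
      using assms(1,2) M2 by (auto simp: less_2_cases_iff)
  qed auto
  then show ?thesis using M2 by simp
next
  case (M3 l Ms ns)
  have "manila k (sum_list (n # ns)) (int (Suc l) - 1) (concat (u # Ms))"
  proof (rule manila.M3)
    show "\<forall>j<Suc l. manila k ((n # ns) ! j) 0 ((u # Ms) ! j)"
    proof (intro allI impI)
      fix j assume "j < Suc l"
      then show "manila k ((n # ns) ! j) 0 ((u # Ms) ! j)"
        using assms(1) M3 by (cases j) auto
    qed
  qed (use M3 in auto)
  then show ?thesis using M3 by simp
qed

lemma parse_main:
  assumes "k \<ge> 2"
  shows "dyck k p \<Longrightarrow> p \<noteq> [] \<Longrightarrow> \<exists>w. manila k (nS p) (int (card (TT k p))) w \<and> phi w = p"
proof (induction "length p" arbitrary: p rule: less_induct)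
  case less
  have any: "\<exists>w i. manila k (nS D) i w \<and> phi w = D" if "dyck k D" "length D < length p" for D
  proof (cases "D = []")
    case True then show ?thesis using manila.M1[of k] by (intro exI[of _ "[]"]) auto
  next
    case False then show ?thesis using less.hyps that by blast
  qed
  show ?case
  proof (cases "TT k p = {}")
    case True
    then have pp: "prim k p" using less.prems by (simp add: prim_def)
    obtain Ds where Ds: "length Ds = k - 1" "\<forall>D\<in>set Ds. dyck k D" "p = South # JJ Ds"
      using parse_prim[OF pp assms] by blast
    have "\<forall>D\<in>set Ds. \<exists>y. manila k (nS D) (snd y) (fst y) \<and> phi (fst y) = D"
    proof
      fix D assume "D \<in> set Ds"
      then have "dyck k D" "length D < length p" using Ds len_JJ[of D Ds] by auto
      then show "\<exists>y. manila k (nS D) (snd y) (fst y) \<and> phi (fst y) = D"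
        using any by force
    qed
    from list_choice[OF this] obtain ys where ys: "length ys = length Ds"
      "\<forall>j<length Ds. manila k (nS (Ds!j)) (snd (ys!j)) (fst (ys!j)) \<and> phi (fst (ys!j)) = Ds!j"
      by blast
    define Ms where "Ms = map fst ys"
    have mapMs: "map phi Ms = Ds" using ys by (intro nth_equalityI) (auto simp: Ms_def)
    have Msne: "Ms \<noteq> []" using Ds ys assms by (auto simp: Ms_def)
    have h1: "nS p \<ge> 1" using Ds by simp
    have h2: "length Ms = k - 1" "length (map nS Ds) = k - 1" "length (map snd ys) = k - 1"
      using Ds ys by (auto simp: Ms_def)
    have h3: "\<forall>j<k-1. manila k (map nS Ds ! j) (map snd ys ! j) (Ms ! j)"
      using Ds ys by (auto simp: Ms_def)
    have h4: "sum_list (map nS Ds) = nS p - 1" using Ds by (simp add: nS_JJ)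
    have "manila k (nS p) 0 (tuple_word Ms)"
      by (rule manila.M2[OF h1 h2 h3 h4])
    moreover have "phi (tuple_word Ms) = p" using phi_tuple[OF Msne] mapMs Ds by simp
    ultimately show ?thesis using True by auto
  next
    case False
    obtain a b where ab: "p = a @ b" "prim k a" "dyck k b" "b \<noteq> []"
      using split_first[OF _ False] less.prems by blast
    have Ta: "TT k a = {}" and da: "dyck k a" and ane: "a \<noteq> []" using ab by (auto simp: prim_def)
    obtain wa where wa: "manila k (nS a) 0 wa" "phi wa = a"
      using less.hyps[of a] ab da ane Ta by auto
    obtain wb where wb: "manila k (nS b) (int (card (TT k b))) wb" "phi wb = b"
      using less.hyps[of b] ab ane by auto
    have "manila k (nS a + nS b) (int (card (TT k b)) + 1) (wa @ wb)"
      by (rule manila_app[OF wa(1) wb(1)]) simp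
    then have "manila k (nS a + nS b) (1 + int (card (TT k b))) (wa @ wb)"
      by (simp add: add.commute)
    moreover have "card (TT k p) = Suc (card (TT k b))"
      using card_touch_append[OF ab(2,3,4)] ab(1) by simp
    ultimately show ?thesis using ab wa wb by (intro exI[of _ "wa @ wb"]) simp
  qed
qed

lemma forward:
  assumes "manila k n i w" "k \<ge> 2"
  shows "dyck k (phi w) \<and> nS (phi w) = n \<and>
    (i = -1 \<and> w = [] \<or> (0 \<le> i \<and> w \<noteq> [] \<and> int (card (TT k (phi w))) = i))"
  using assms
proof (induction rule: manila.induct)
  case M1 then show ?case by (simp add: dyck_def)
next
  case (M2 n Ms ns "is")
  define Ds where "Ds = map phi Ms"
  have dD: "\<forall>D\<in>set Ds. dyck k D" using M2 by (auto simp: Ds_def in_set_conv_nth)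
  have Msne: "Ms \<noteq> []" using M2 by auto
  have pr: "prim k (phi (tuple_word Ms))"
    using primJ[OF dD _ M2(7)] M2 phi_tuple[OF Msne] by (simp add: Ds_def)
  have "map nS Ds = ns" using M2 by (intro nth_equalityI) (auto simp: Ds_def)
  then have "nS (phi (tuple_word Ms)) = n"
    using phi_tuple[OF Msne] M2 by (simp add: nS_JJ Ds_def)
  then show ?case using pr by (auto simp: prim_def tuple_word_def)
next
  case (M3 l Ms ns n)
  have pr: "\<forall>a\<in>set (map phi Ms). prim k a"
  proof
    fix a assume "a \<in> set (map phi Ms)"
    then obtain j where j: "j < l" "a = phi (Ms ! j)" using M3 by (auto simp: in_set_conv_nth)
    then have "dyck k a" "Ms ! j \<noteq> []" "card (TT k a) = 0" using M3 by auto
    moreover have "a \<noteq> []" using \<open>Ms ! j \<noteq> []\<close> j(2) by (metis length_0_conv length_phi)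
    ultimately show "prim k a" by (auto simp: prim_def)
  qed
  have ne: "map phi Ms \<noteq> []" using M3 by auto
  have cp: "dyck k (concat (map phi Ms)) \<and> card (TT k (concat (map phi Ms))) = l - 1 \<and> concat (map phi Ms) \<noteq> []"
    using concat_prim[OF pr ne] M3 by simp
  have "map (nS \<circ> phi) Ms = ns" using M3 by (intro nth_equalityI) auto
  then have f1: "nS (phi (concat Ms)) = n" using M3 by (simp add: nS_concat)
  have f2: "concat Ms \<noteq> []" using cp by (metis length_0_conv length_phi phi_simps(4))
  have f3: "int (card (TT k (phi (concat Ms)))) = int l - 1"
    using cp M3(1) by (simp add: of_nat_diff)
  have f4: "dyck k (phi (concat Ms))" using cp by simp
  have f5: "(0::int) \<le> int l - 1" using M3(1) by simp
  show ?case
    apply (rule conjI[OF f4])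
    apply (rule conjI[OF f1])
    apply (rule disjI2)
    using f2 f3 f5 by (intro conjI)
qed

lemma take_count_le: "length (filter P (take m xs)) \<le> length (filter P xs)"
proof -
  have "xs = take m xs @ drop m xs" by simp
  then have "length (filter P xs) = length (filter P (take m xs)) + length (filter P (drop m xs))"
    by (metis filter_append length_append)
  then show ?thesis by simp
qed

lemma pointwise:
  assumes "nW p = (k-1) * n" "nS p = n"
  shows "(let (x, y) = pos k n (take m p) in 0 \<le> x \<and> 0 \<le> y \<and> int (k - 1) * y \<le> x)
           \<longleftrightarrow> 0 \<le> hgt k (take m p)"
    and "(let (x, y) = pos k n (take m p) in int (k - 1) * y = x) \<longleftrightarrow> hgt k (take m p) = 0"
proof -
  have a: "nW (take m p) \<le> (k-1) * n" "nS (take m p) \<le> n"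
    using assms take_count_le unfolding nW_def nS_def by metis+
  show "(let (x, y) = pos k n (take m p) in 0 \<le> x \<and> 0 \<le> y \<and> int (k - 1) * y \<le> x)
           \<longleftrightarrow> 0 \<le> hgt k (take m p)"
  proof -
    have e: "int ((k-1)*n) = int (k-1) * int n" by simp
    have a': "int (nW (take m p)) \<le> int (k-1) * int n" "int (nS (take m p)) \<le> int n"
      using a by (metis of_nat_le_iff of_nat_mult)+
    show ?thesis
      unfolding pos_def hgt_def nW_def[symmetric] nS_def[symmetric] Let_def case_prod_conv e
      using a' by (auto simp: right_diff_distrib)
  qed
  show "(let (x, y) = pos k n (take m p) in int (k - 1) * y = x) \<longleftrightarrow> hgt k (take m p) = 0"
  proof -
    have e: "int ((k-1)*n) = int (k-1) * int n" by simp
    show ?thesis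
      unfolding pos_def hgt_def nW_def[symmetric] nS_def[symmetric] Let_def case_prod_conv e
      by (auto simp: right_diff_distrib)
  qed
qed



lemma touch_card:
  assumes "nW p = (k-1) * n" "nS p = n"
  shows "card {pos k n (take m p) | m. 0 < m \<and> m < length p \<and>
              (let (x, y) = pos k n (take m p) in int (k - 1) * y = x)} = card (TT k p)"
proof -
  have eq: "{pos k n (take m p) | m. 0 < m \<and> m < length p \<and>
              (let (x, y) = pos k n (take m p) in int (k - 1) * y = x)} = (\<lambda>m. pos k n (take m p)) ` TT k p"
    unfolding TT_def pointwise(2)[OF assms] by blast
  have "inj_on (\<lambda>m. pos k n (take m p)) (TT k p)"
  proof (rule inj_onI)
    fix m1 m2 assume m: "m1 \<in> TT k p" "m2 \<in> TT k p" "pos k n (take m1 p) = pos k n (take m2 p)"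
    then have "nW (take m1 p) = nW (take m2 p)" "nS (take m1 p) = nS (take m2 p)"
      unfolding pos_def nW_def[symmetric] nS_def[symmetric] by auto
    then have "length (take m1 p) = length (take m2 p)" using nS_nW by metis
    then show "m1 = m2" using m by (auto simp: TT_def)
  qed
  then show ?thesis unfolding eq by (rule card_image)
qed

lemma Paths_char: "Paths k n i = {p. dyck k p \<and> nS p = n \<and> card (TT k p) = i}"
proof (intro set_eqI iffI)
  fix p assume pP: "p \<in> Paths k n i"
  have PP: "pos k n p = (0, 0) \<and> (\<forall>m \<le> length p. let (x, y) = pos k n (take m p) in 0 \<le> x \<and> 0 \<le> y \<and> int (k - 1) * y \<le> x) \<and>
    card {pos k n (take m p) | m. 0 < m \<and> m < length p \<and>
              (let (x, y) = pos k n (take m p) in int (k - 1) * y = x)} = i"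
    by (rule CollectD[OF pP[unfolded Paths_def]])
  note P1 = conjunct1[OF PP]
  note P2 = conjunct1[OF conjunct2[OF PP]]
  note P3 = conjunct2[OF conjunct2[OF PP]]
  from P1 have "int (nW p) = int ((k-1) * n)" "int (nS p) = int n"
    unfolding pos_def nW_def[symmetric] nS_def[symmetric] by auto
  then have c: "nW p = (k-1) * n" "nS p = n" by (simp_all only: of_nat_eq_iff)
  have "dyck k p"
    unfolding dyck_def
  proof (intro conjI allI impI)
    fix m assume "m \<le> length p"
    then show "0 \<le> hgt k (take m p)" using P2 pointwise(1)[OF c] by blast
  next
    show "hgt k p = 0" using c by (simp add: hgt_def)
  qed
  then show "p \<in> {p. dyck k p \<and> nS p = n \<and> card (TT k p) = i}"
    using c P3 touch_card[OF c] by simp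
next
  fix p assume "p \<in> {p. dyck k p \<and> nS p = n \<and> card (TT k p) = i}"
  then have d: "dyck k p" and ns: "nS p = n" and ct: "card (TT k p) = i" by auto
  have "hgt k p = 0" using d by (simp add: dyck_def)
  then have "int (nW p) = int (k-1) * int n" using ns by (simp add: hgt_def)
  then have c: "nW p = (k-1) * n" "nS p = n" using ns by (simp_all add: of_nat_mult[symmetric] del: of_nat_mult)
  have P1: "pos k n p = (0, 0)" using c by (simp add: pos_def nW_def[symmetric] nS_def[symmetric])
  have P2: "\<forall>m \<le> length p. let (x, y) = pos k n (take m p) in 0 \<le> x \<and> 0 \<le> y \<and> int (k - 1) * y \<le> x"
    using d pointwise(1)[OF c] by (simp add: dyck_def)
  have P3: "card {pos k n (take m p) | m. 0 < m \<and> m < length p \<and>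
              (let (x, y) = pos k n (take m p) in int (k - 1) * y = x)} = i"
    using trans[OF touch_card[OF c] ct] .
  show "p \<in> Paths k n i"
    unfolding Paths_def mem_Collect_eq using conjI[OF P1 conjI[OF P2 P3]] .
qed

theorem lemma5p5:
  fixes k n i :: nat
  assumes "k \<ge> 2" and "n \<ge> 1"
  shows "card (Manila k n (int i)) = card (Paths k n i)"
proof -
  have inj: "inj_on phi (Manila k n (int i))"
  proof (rule inj_onI)
    fix x y assume x: "x \<in> Manila k n (int i)" and y: "y \<in> Manila k n (int i)" and e: "phi x = phi y"
    have "manila k n (int i) x" "manila k n (int i) y" using x y by (simp_all add: Manila_def)
    then have "psi k [] (phi x) = x" "psi k [] (phi y) = y" using psi_phi assms(1) by blast+
    then show "x = y" using e by metis
  qed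
  have img: "phi ` Manila k n (int i) = Paths k n i"
  proof (intro set_eqI iffI)
    fix p assume "p \<in> phi ` Manila k n (int i)"
    then obtain w where w: "manila k n (int i) w" "p = phi w" by (auto simp: Manila_def)
    have F: "dyck k (phi w) \<and> nS (phi w) = n \<and>
      (int i = -1 \<and> w = [] \<or> (0 \<le> int i \<and> w \<noteq> [] \<and> int (card (TT k (phi w))) = int i))"
      using forward[OF w(1) assms(1)] .
    then have "card (TT k (phi w)) = i" by linarith
    then have "phi w \<in> {p. dyck k p \<and> nS p = n \<and> card (TT k p) = i}" using F by blast
    then show "p \<in> Paths k n i" using w(2) Paths_char by metis
  next
    fix p assume "p \<in> Paths k n i"
    then have "p \<in> {p. dyck k p \<and> nS p = n \<and> card (TT k p) = i}" using Paths_char by metis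
    then have d: "dyck k p" "nS p = n" "card (TT k p) = i" by auto
    then have "p \<noteq> []" using assms(2) by auto
    then obtain w where "manila k (nS p) (int (card (TT k p))) w" "phi w = p"
      using parse_main[OF assms(1) d(1)] by blast
    then show "p \<in> phi ` Manila k n (int i)" using d unfolding Manila_def by blast
  qed
  show ?thesis using card_image[OF inj] img by simp
qed


end
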